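(* Let $(\mathcal L,S,\pi_0,\pi_1,\sigma)$ be a summable category with flip $c$. For $l\in\mathbb N$ and an object $X$ define $c^{(l)}_X\in\mathcal L(S^{l+2}X,S^{l+2}X)$ by $c^{(0)}_X=c_X$ and $c^{(l+1)}_X=c_{S^{l+1}X}\circ S(c^{(l)}_X)$. Then for all $i_0,\dots,i_{l+1}\in\{0,1\}$, $$\pi_{i_{l+1}}\circ\cdots\circ\pi_{i_0}\circ c^{(l)}_X=\pi_{i_0}\circ\pi_{i_{l+1}}\circ\cdots\circ\pi_{i_1}$$ as morphisms $S^{l+2}X\to X$ (each $\pi_i$ taken at the appropriate object).
   Context: A summable category consists of a category $\mathcal L$ with zero morphisms, a functor $S:\mathcal L\to\mathcal L$ and natural transformations $\pi_0,\pi_1,\sigma:S\Rightarrow\mathrm{Id}$ with $\pi_0,\pi_1$ jointly monic, satisfying the axioms of summable categories of Ehrhard's coherent differentiation. These axioms guarantee the existence of a natural transformation $c:S^2\Rightarrow S^2$ (the flip) uniquely characterised by $\pi_i\circ\pi_j\circ c_X=\pi_j\circ\pi_i$ for all $i,j\in\{0,1\}$. *)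

theory Defs
  imports Main
begin

text \<open>A category is given by arrows (predicate arr on type 'm), domain/codomain
 maps into the type of objects 'o (every element of 'o is an object),
 composition comp g f (= g after f) and identities. It is equipped with zero
 morphisms, an endofunctor S = (So, Sm), and families pr0, pr1, sg indexed by
 objects (components of the natural transformations S => Id).\<close>

record ('o, 'm) sumcat =
  arr   :: "'m \<Rightarrow> bool"
  dom   :: "'m \<Rightarrow> 'o"
  cod   :: "'m \<Rightarrow> 'o"
  comp  :: "'m \<Rightarrow> 'm \<Rightarrow> 'm"
  ident :: "'o \<Rightarrow> 'm"
  zero  :: "'o \<Rightarrow> 'o \<Rightarrow> 'm"
  So    :: "'o \<Rightarrow> 'o"
  Sm    :: "'m \<Rightarrow> 'm"
  pr0   :: "'o \<Rightarrow> 'm"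
  pr1   :: "'o \<Rightarrow> 'm"
  sg    :: "'o \<Rightarrow> 'm"

definition hom :: "('o, 'm) sumcat \<Rightarrow> 'o \<Rightarrow> 'o \<Rightarrow> 'm set" where
  "hom C X Y = {f. arr C f \<and> dom C f = X \<and> cod C f = Y}"

definition is_category :: "('o, 'm) sumcat \<Rightarrow> bool" where
  "is_category C \<longleftrightarrow>
     (\<forall>X. ident C X \<in> hom C X X) \<and>
     (\<forall>f g. arr C f \<and> arr C g \<and> cod C f = dom C g \<longrightarrow>
              comp C g f \<in> hom C (dom C f) (cod C g)) \<and>
     (\<forall>f. arr C f \<longrightarrow> comp C f (ident C (dom C f)) = f \<and> comp C (ident C (cod C f)) f = f) \<and>
     (\<forall>f g h. arr C f \<and> arr C g \<and> arr C h \<and> cod C f = dom C g \<and> cod C g = dom C h \<longrightarrow>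
              comp C h (comp C g f) = comp C (comp C h g) f)"

definition has_zero_morphisms :: "('o, 'm) sumcat \<Rightarrow> bool" where
  "has_zero_morphisms C \<longleftrightarrow>
     (\<forall>X Y. zero C X Y \<in> hom C X Y) \<and>
     (\<forall>X Y Z f. f \<in> hom C X Y \<longrightarrow>
        comp C (zero C Y Z) f = zero C X Z \<and> comp C f (zero C Z X) = zero C Z Y)"

definition is_endofunctor_S :: "('o, 'm) sumcat \<Rightarrow> bool" where
  "is_endofunctor_S C \<longleftrightarrow>
     (\<forall>f. arr C f \<longrightarrow> Sm C f \<in> hom C (So C (dom C f)) (So C (cod C f))) \<and>
     (\<forall>X. Sm C (ident C X) = ident C (So C X)) \<and>
     (\<forall>f g. arr C f \<and> arr C g \<and> cod C f = dom C g \<longrightarrow>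
              Sm C (comp C g f) = comp C (Sm C g) (Sm C f))"

definition nat_S_Id :: "('o, 'm) sumcat \<Rightarrow> ('o \<Rightarrow> 'm) \<Rightarrow> bool" where
  "nat_S_Id C \<eta> \<longleftrightarrow>
     (\<forall>X. \<eta> X \<in> hom C (So C X) X) \<and>
     (\<forall>f. arr C f \<longrightarrow> comp C f (\<eta> (dom C f)) = comp C (\<eta> (cod C f)) (Sm C f))"

definition jointly_monic :: "('o, 'm) sumcat \<Rightarrow> bool" where
  "jointly_monic C \<longleftrightarrow>
     (\<forall>X Y f g. f \<in> hom C Y (So C X) \<and> g \<in> hom C Y (So C X) \<and>
        comp C (pr0 C X) f = comp C (pr0 C X) g \<and> comp C (pr1 C X) f = comp C (pr1 C X) g
        \<longrightarrow> f = g)"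

text \<open>(f0,f1) in L(X,Y) is summable with sum s: there is a witness h : X -> S Y
 with pr0 h = f0, pr1 h = f1 and sg h = s (the witness is unique by joint monicity).\<close>
definition has_sum :: "('o, 'm) sumcat \<Rightarrow> 'o \<Rightarrow> 'o \<Rightarrow> 'm \<Rightarrow> 'm \<Rightarrow> 'm \<Rightarrow> bool" where
  "has_sum C X Y f0 f1 s \<longleftrightarrow>
     (\<exists>h \<in> hom C X (So C Y). comp C (pr0 C Y) h = f0 \<and> comp C (pr1 C Y) h = f1 \<and>
                             comp C (sg C Y) h = s)"

definition summable :: "('o, 'm) sumcat \<Rightarrow> 'o \<Rightarrow> 'o \<Rightarrow> 'm \<Rightarrow> 'm \<Rightarrow> bool" where
  "summable C X Y f0 f1 \<longleftrightarrow> (\<exists>s. has_sum C X Y f0 f1 s)"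

definition summable_category :: "('o, 'm) sumcat \<Rightarrow> bool" where
  "summable_category C \<longleftrightarrow>
     is_category C \<and> has_zero_morphisms C \<and> is_endofunctor_S C \<and>
     nat_S_Id C (pr0 C) \<and> nat_S_Id C (pr1 C) \<and> nat_S_Id C (sg C) \<and>
     jointly_monic C \<and>
     \<comment> \<open>(S+-zero)\<close>
     (\<forall>X Y f. f \<in> hom C X Y \<longrightarrow>
        has_sum C X Y f (zero C X Y) f \<and> has_sum C X Y (zero C X Y) f f) \<and>
     \<comment> \<open>(S+-witness)\<close>
     (\<forall>X Y f0 f1. f0 \<in> hom C X (So C Y) \<and> f1 \<in> hom C X (So C Y) \<and>
        summable C X Y (comp C (pr0 C Y) f0) (comp C (pr0 C Y) f1) \<and>
        summable C X Y (comp C (pr1 C Y) f0) (comp C (pr1 C Y) f1)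
        \<longrightarrow> summable C X (So C Y) f0 f1) \<and>
     \<comment> \<open>(S+-com)\<close>
     (\<forall>X Y f0 f1 s. has_sum C X Y f0 f1 s \<longrightarrow> has_sum C X Y f1 f0 s) \<and>
     \<comment> \<open>(S+-assoc)\<close>
     (\<forall>X Y f00 f01 f10 f11 s0 s1 s.
        has_sum C X Y f00 f01 s0 \<and> has_sum C X Y f10 f11 s1 \<and> has_sum C X Y s0 s1 s
        \<longrightarrow> (\<exists>t0 t1. has_sum C X Y f00 f10 t0 \<and> has_sum C X Y f01 f11 t1 \<and>
                     has_sum C X Y t0 t1 s))"

definition prj :: "('o, 'm) sumcat \<Rightarrow> nat \<Rightarrow> 'o \<Rightarrow> 'm" where
  "prj C i X = (if i = 0 then pr0 C X else pr1 C X)"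

text \<open>c is the flip: c_X : S^2 X -> S^2 X with pi_i o pi_j o c_X = pi_j o pi_i
 (pi_j taken at S X, pi_i at X). By joint monicity this determines c uniquely.\<close>
definition is_flip :: "('o, 'm) sumcat \<Rightarrow> ('o \<Rightarrow> 'm) \<Rightarrow> bool" where
  "is_flip C c \<longleftrightarrow>
     (\<forall>X. c X \<in> hom C (So C (So C X)) (So C (So C X)) \<and>
        (\<forall>i\<in>{0,1}. \<forall>j\<in>{0,1}.
           comp C (prj C i X) (comp C (prj C j (So C X)) (c X)) =
           comp C (prj C j X) (prj C i (So C X))))"

text \<open>proj_chain C idx n X = pi_{idx(n-1)} o ... o pi_{idx 0} : S^n X -> X,
 where pi_{idx 0} is taken at S^(n-1) X, ..., pi_{idx(n-1)} at X.\<close>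
fun proj_chain :: "('o, 'm) sumcat \<Rightarrow> (nat \<Rightarrow> nat) \<Rightarrow> nat \<Rightarrow> 'o \<Rightarrow> 'm" where
  "proj_chain C idx 0 X = ident C X"
| "proj_chain C idx (Suc n) X =
     comp C (proj_chain C (\<lambda>k. idx (Suc k)) n X) (prj C (idx 0) ((So C ^^ n) X))"

fun iter_flip :: "('o, 'm) sumcat \<Rightarrow> ('o \<Rightarrow> 'm) \<Rightarrow> nat \<Rightarrow> 'o \<Rightarrow> 'm" where
  "iter_flip C c 0 X = c X"
| "iter_flip C c (Suc l) X = comp C (c ((So C ^^ Suc l) X)) (Sm C (iter_flip C c l X))"

end

theory Submission
  imports Defs
begin

lemma sc_cat: "summable_category C \<Longrightarrow> is_category C"
  and sc_fun: "summable_category C \<Longrightarrow> is_endofunctor_S C"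
  and sc_p0: "summable_category C \<Longrightarrow> nat_S_Id C (pr0 C)"
  and sc_p1: "summable_category C \<Longrightarrow> nat_S_Id C (pr1 C)"
  by (simp_all add: summable_category_def)

lemma c_comp: "is_category C \<Longrightarrow> f \<in> hom C A B \<Longrightarrow> g \<in> hom C B D \<Longrightarrow> comp C g f \<in> hom C A D"
  unfolding is_category_def hom_def by auto

lemma c_assoc: "is_category C \<Longrightarrow> f \<in> hom C A B \<Longrightarrow> g \<in> hom C B D \<Longrightarrow> h \<in> hom C D E
   \<Longrightarrow> comp C h (comp C g f) = comp C (comp C h g) f"
  unfolding is_category_def hom_def by auto

lemma c_idl: "is_category C \<Longrightarrow> f \<in> hom C A B \<Longrightarrow> comp C (ident C B) f = f"
  unfolding is_category_def hom_def by auto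

lemma c_idr: "is_category C \<Longrightarrow> f \<in> hom C A B \<Longrightarrow> comp C f (ident C A) = f"
  unfolding is_category_def hom_def by auto

lemma c_id: "is_category C \<Longrightarrow> ident C A \<in> hom C A A"
  unfolding is_category_def by auto

lemma prj_hom: "summable_category C \<Longrightarrow> prj C i X \<in> hom C (So C X) X"
  using sc_p0[of C] sc_p1[of C] unfolding nat_S_Id_def prj_def by auto

lemma prj_nat: "summable_category C \<Longrightarrow> f \<in> hom C A B \<Longrightarrow>
   comp C f (prj C i A) = comp C (prj C i B) (Sm C f)"
  using sc_p0[of C] sc_p1[of C] unfolding nat_S_Id_def prj_def hom_def by auto

lemma Sm_hom: "summable_category C \<Longrightarrow> f \<in> hom C A B \<Longrightarrow> Sm C f \<in> hom C (So C A) (So C B)"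
  using sc_fun[of C] unfolding is_endofunctor_S_def hom_def by auto

lemma prj_norm: "prj C i X = prj C (if i = 0 then 0 else 1) X"
  by (simp add: prj_def)

lemma flip_all: "is_flip C c \<Longrightarrow>
   comp C (prj C i X) (comp C (prj C j (So C X)) (c X)) = comp C (prj C j X) (prj C i (So C X))"
proof -
  assume a: "is_flip C c"
  have "\<forall>i\<in>{0,1}. \<forall>j\<in>{0,1}. comp C (prj C i X) (comp C (prj C j (So C X)) (c X)) =
           comp C (prj C j X) (prj C i (So C X))" using a unfolding is_flip_def by blast
  hence "comp C (prj C (if i = 0 then 0 else 1) X) (comp C (prj C (if j = 0 then 0 else 1) (So C X)) (c X)) =
      comp C (prj C (if j = 0 then 0 else 1) X) (prj C (if i = 0 then 0 else 1) (So C X))" by simp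
  thus ?thesis by (metis prj_norm)
qed

lemma flip_hom: "is_flip C c \<Longrightarrow> c X \<in> hom C (So C (So C X)) (So C (So C X))"
  unfolding is_flip_def by auto

lemma pc_hom: "summable_category C \<Longrightarrow> proj_chain C idx n X \<in> hom C ((So C ^^ n) X) X"
proof (induction n arbitrary: idx)
  case 0 then show ?case using c_id[OF sc_cat[OF 0]] by simp
next
  case (Suc n)
  then show ?case using c_comp[OF sc_cat[OF Suc.prems] prj_hom[OF Suc.prems] Suc.IH[OF Suc.prems]]
    by simp
qed

lemma if_hom: "summable_category C \<Longrightarrow> is_flip C c \<Longrightarrow>
   iter_flip C c l X \<in> hom C ((So C ^^ Suc (Suc l)) X) ((So C ^^ Suc (Suc l)) X)"
proof (induction l)
  case 0 then show ?case using flip_hom by simp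
next
  case (Suc l)
  have "Sm C (iter_flip C c l X) \<in> hom C ((So C ^^ Suc (Suc (Suc l))) X) ((So C ^^ Suc (Suc (Suc l))) X)"
    using Sm_hom[OF Suc.prems(1) Suc.IH[OF Suc.prems]] by simp
  moreover have "c ((So C ^^ Suc l) X) \<in> hom C ((So C ^^ Suc (Suc (Suc l))) X) ((So C ^^ Suc (Suc (Suc l))) X)"
    using flip_hom[OF Suc.prems(2)] by simp
  ultimately show ?case using c_comp[OF sc_cat[OF Suc.prems(1)]] by simp
qed

lemma main_gen:
  assumes sc: "summable_category C" and fl: "is_flip C c"
  shows "comp C (proj_chain C idx (Suc (Suc l)) X) (iter_flip C c l X) =
         comp C (prj C (idx 0) X) (proj_chain C (\<lambda>k. idx (Suc k)) (Suc l) (So C X))"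
proof (induction l arbitrary: idx)
  case 0
  have cat: "is_category C" using sc sc_cat by blast
  have p1: "prj C (idx 1) X \<in> hom C (So C X) X" using prj_hom[OF sc] .
  have p0: "prj C (idx 0) (So C X) \<in> hom C (So C (So C X)) (So C X)" using prj_hom[OF sc] .
  have cx: "c X \<in> hom C (So C (So C X)) (So C (So C X))" using flip_hom[OF fl] .
  have "comp C (proj_chain C idx 2 X) (c X) =
     comp C (comp C (comp C (ident C X) (prj C (idx 1) X)) (prj C (idx 0) (So C X))) (c X)"
    by (simp add: numeral_2_eq_2)
  also have "\<dots> = comp C (prj C (idx 1) X) (comp C (prj C (idx 0) (So C X)) (c X))"
    using c_idl[OF cat p1] c_assoc[OF cat cx p0 p1] by simp
  also have "\<dots> = comp C (prj C (idx 0) X) (prj C (idx 1) (So C X))"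
    using flip_all[OF fl] by blast
  also have "\<dots> = comp C (prj C (idx 0) X) (proj_chain C (\<lambda>k. idx (Suc k)) 1 (So C X))"
    using c_idl[OF cat prj_hom[OF sc]] by simp
  finally show ?case by (simp add: numeral_2_eq_2)
next
  case (Suc l)
  have cat: "is_category C" using sc sc_cat by blast
  define Y where "Y = (So C ^^ Suc l) X"
  define Q where "Q = proj_chain C (\<lambda>k. idx (Suc (Suc k))) (Suc l) X"
  define F where "F = iter_flip C c l X"
  define R where "R = proj_chain C (\<lambda>k. idx (Suc (Suc k))) (Suc l) (So C X)"
  define a where "a = prj C (idx 1) Y"
  define b where "b = prj C (idx 0) (So C Y)"
  define a0 where "a0 = prj C (idx 0) Y"
  define b1 where "b1 = prj C (idx 1) (So C Y)"
  define p where "p = prj C (idx 0) X"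
  have Qh: "Q \<in> hom C Y X" unfolding Q_def Y_def using pc_hom[OF sc] .
  have Fh: "F \<in> hom C (So C Y) (So C Y)" unfolding F_def Y_def using if_hom[OF sc fl] by simp
  have SFh: "Sm C F \<in> hom C (So C (So C Y)) (So C (So C Y))" using Sm_hom[OF sc Fh] .
  have ah: "a \<in> hom C (So C Y) Y" unfolding a_def using prj_hom[OF sc] .
  have a0h: "a0 \<in> hom C (So C Y) Y" unfolding a0_def using prj_hom[OF sc] .
  have bh: "b \<in> hom C (So C (So C Y)) (So C Y)" unfolding b_def using prj_hom[OF sc] .
  have b1h: "b1 \<in> hom C (So C (So C Y)) (So C Y)" unfolding b1_def using prj_hom[OF sc] .
  have cY: "c Y \<in> hom C (So C (So C Y)) (So C (So C Y))" using flip_hom[OF fl] .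
  have ph: "p \<in> hom C (So C X) X" unfolding p_def using prj_hom[OF sc] .
  have Rh: "R \<in> hom C (So C Y) (So C X)" unfolding R_def Y_def using pc_hom[OF sc]
    by (metis funpow_swap1)
  have L: "proj_chain C idx (Suc (Suc (Suc l))) X = comp C (comp C Q a) b"
    unfolding Q_def a_def b_def Y_def by simp
  have IF: "iter_flip C c (Suc l) X = comp C (c Y) (Sm C F)"
    unfolding Y_def F_def by simp
  define idx' where "idx' = (\<lambda>k. if k = 0 then idx 0 else idx (Suc k))"
  have sh: "(\<lambda>k. idx' (Suc k)) = (\<lambda>k. idx (Suc (Suc k)))" unfolding idx'_def by simp
  have Q0: "proj_chain C idx' (Suc (Suc l)) X = comp C Q a0"
    unfolding Q_def a0_def Y_def using sh by (simp add: idx'_def)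
  have IH: "comp C (comp C Q a0) F = comp C p R"
    using Suc.IH[of idx'] unfolding Q0 F_def sh p_def R_def by (simp add: idx'_def)
  have RR: "proj_chain C (\<lambda>k. idx (Suc k)) (Suc (Suc l)) (So C X) = comp C R b1"
    unfolding R_def b1_def Y_def by (simp add: funpow_swap1)
  have QAh: "comp C Q a \<in> hom C (So C Y) X" using c_comp[OF cat ah Qh] .
  have cSh: "comp C (c Y) (Sm C F) \<in> hom C (So C (So C Y)) (So C (So C Y))" using c_comp[OF cat SFh cY] .
  have bch: "comp C b (c Y) \<in> hom C (So C (So C Y)) (So C Y)" using c_comp[OF cat cY bh] .
  have bcSh: "comp C b (comp C (c Y) (Sm C F)) \<in> hom C (So C (So C Y)) (So C Y)" using c_comp[OF cat cSh bh] .
  have Fb1h: "comp C F b1 \<in> hom C (So C (So C Y)) (So C Y)" using c_comp[OF cat b1h Fh] .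
  have QA0h: "comp C Q a0 \<in> hom C (So C Y) X" using c_comp[OF cat a0h Qh] .
  have e1: "comp C (comp C (comp C Q a) b) (comp C (c Y) (Sm C F))
      = comp C Q (comp C a (comp C b (comp C (c Y) (Sm C F))))"
    using c_assoc[OF cat cSh bh QAh] c_assoc[OF cat bcSh ah Qh] by simp
  have e2: "comp C a (comp C b (comp C (c Y) (Sm C F))) = comp C (comp C a (comp C b (c Y))) (Sm C F)"
    using c_assoc[OF cat SFh cY bh] c_assoc[OF cat SFh bch ah] by simp
  have "comp C (comp C (comp C Q a) b) (comp C (c Y) (Sm C F))
      = comp C Q (comp C (comp C a (comp C b (c Y))) (Sm C F))"
    using e1 e2 by simp
  also have "\<dots> = comp C Q (comp C (comp C a0 b1) (Sm C F))"
    using flip_all[OF fl, of "idx 1" Y "idx 0"] unfolding a_def b_def a0_def b1_def by simp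
  also have "\<dots> = comp C Q (comp C a0 (comp C b1 (Sm C F)))"
    using c_assoc[OF cat SFh b1h a0h] by simp
  also have "\<dots> = comp C Q (comp C a0 (comp C F b1))"
    using prj_nat[OF sc Fh] unfolding b1_def by simp
  also have "\<dots> = comp C (comp C (comp C Q a0) F) b1"
    using c_assoc[OF cat b1h Fh a0h] c_assoc[OF cat Fb1h a0h Qh] c_assoc[OF cat b1h Fh QA0h]
      c_assoc[OF cat Fh a0h Qh] by simp
  also have "\<dots> = comp C p (comp C R b1)"
    unfolding IH using c_assoc[OF cat b1h Rh ph] by simp
  finally show ?case unfolding L IF RR p_def .
qed

theorem mainTheorem2:
  fixes C :: "('o, 'm) sumcat" and c :: "'o \<Rightarrow> 'm" and l :: nat and X :: 'o
    and idx :: "nat \<Rightarrow> nat"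
  assumes "summable_category C"
    and "is_flip C c"
    and "\<forall>k \<le> Suc l. idx k \<in> {0, 1}"
  shows "comp C (proj_chain C idx (Suc (Suc l)) X) (iter_flip C c l X) =
         comp C (prj C (idx 0) X) (proj_chain C (\<lambda>k. idx (Suc k)) (Suc l) (So C X))"
  using main_gen[OF assms(1,2)] .

end
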